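(* For every $n\in\mathbb N$ and every choice of digits $c_j\in\{0,\dots,m_j\}$, $j=1,\dots,n$, the increment of $F$ on the cylinder $\Delta^{-\tilde Q}_{c_1c_2\dots c_n}$ equals $$\mu_F\big(\Delta^{-\tilde Q}_{c_1c_2\dots c_n}\big)=\prod_{j=1}^{n}\tilde p_{c_j,j}.$$
   Context: Let $(m_n)_{n\ge1}$ be finite nonnegative integers and $\tilde Q=\|q_{i,n}\|$ ($i\in\{0,\dots,m_n\}$) with $q_{i,n}>0$, $\sum_{i}q_{i,n}=1$ for all $n$, and $\prod_n q_{i_n,n}=0$ for every digit sequence $(i_n)$. Put $a_{0,n}=0$, $a_{i,n}=\sum_{l<i}q_{l,n}$; $\Delta^{\tilde Q}_{j_1j_2\dots}=a_{j_1,1}+\sum_{n\ge2}a_{j_n,n}\prod_{l<n}q_{j_l,l}$. For odd $n$: $\tilde q_{i,n}=q_{i,n}$; for even $n$: $\tilde q_{i,n}=q_{m_n-i,n}$. The nega-$\tilde Q$-representation $x=\Delta^{-\tilde Q}_{i_1i_2\dots}$ means $x=\Delta^{\tilde Q}_{i_1[m_2-i_2]i_3[m_4-i_4]\dots}$; every $x\in[0,1]$ has one. The cylinder $\Delta^{-\tilde Q}_{c_1\dots c_n}$ is the set of $x\in[0,1]$ having a nega-$\tilde Q$-representation whose first $n$ digits are $c_1,\dots,c_n$; it is the segment with endpoints $A=\Delta^{-\tilde Q}_{c_1\dots c_nm_{n+1}0m_{n+3}0m_{n+5}\dots}$ and $B=\Delta^{-\tilde Q}_{c_1\dots c_n0m_{n+2}0m_{n+4}\dots}$,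 where $A$ is the left and $B$ the right endpoint if $n$ is odd, and vice versa if $n$ is even. The increment $\mu_F$ of $F$ on the cylinder is $F(\text{right endpoint})-F(\text{left endpoint})$. Let $P=\|p_{i,n}\|$ have the same shape with $p_{i,n}\in(-1,1)$, $\sum_ip_{i,n}=1$, $\prod_n|p_{i_n,n}|=0$ for every digit sequence, $0<\sum_{i<c}p_{i,n}<1$ for $c\in\{1,\dots,m_n\}$. Put $\beta_{0,n}=0$, $\beta_{c,n}=\sum_{i<c}p_{i,n}$; for odd $n$: $\tilde p_{i,n}=p_{i,n}$, $\tilde\beta_{i,n}=\beta_{i,n}$; for even $n$: $\tilde p_{i,n}=p_{m_n-i,n}$, $\tilde\beta_{i,n}=\beta_{m_n-i,n}$. $F(x)=\beta_{i_1,1}+\sum_{k\ge2}\tilde\beta_{i_k,k}\prod_{j<k}\tilde p_{i_j,j}$ for $x=\Delta^{-\tilde Q}_{i_1i_2\dots}$ (independent of the choice of representation). *)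

theory Defs
  imports "HOL-Analysis.Analysis"
begin

text \<open>Conventions: positions n are indexed from 1; digit i of position n.
  m :: nat \<Rightarrow> nat gives m_n; q i n = q_{i,n}; p i n = p_{i,n};
  a digit sequence is a function d :: nat \<Rightarrow> nat (value at 0 irrelevant).\<close>

definition admissible :: "(nat \<Rightarrow> nat) \<Rightarrow> (nat \<Rightarrow> nat) \<Rightarrow> bool" where
  "admissible m d \<longleftrightarrow> (\<forall>n\<ge>1. d n \<le> m n)"

definition aQ :: "(nat \<Rightarrow> nat \<Rightarrow> real) \<Rightarrow> nat \<Rightarrow> nat \<Rightarrow> real" where
  "aQ q i n = (\<Sum>l<i. q l n)"

definition DeltaQ :: "(nat \<Rightarrow> nat \<Rightarrow> real) \<Rightarrow> (nat \<Rightarrow> nat) \<Rightarrow> real" where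
  "DeltaQ q j = (\<Sum>k. aQ q (j (Suc k)) (Suc k) * (\<Prod>l\<in>{1..k}. q (j l) l))"

text \<open>Nega-Q-representation value: x = Delta^Q_{i1 [m2-i2] i3 [m4-i4] ...}\<close>
definition negaDigits :: "(nat \<Rightarrow> nat) \<Rightarrow> (nat \<Rightarrow> nat) \<Rightarrow> nat \<Rightarrow> nat" where
  "negaDigits m d n = (if odd n then d n else m n - d n)"

definition negaQ :: "(nat \<Rightarrow> nat) \<Rightarrow> (nat \<Rightarrow> nat \<Rightarrow> real) \<Rightarrow> (nat \<Rightarrow> nat) \<Rightarrow> real" where
  "negaQ m q d = DeltaQ q (negaDigits m d)"

definition betaP :: "(nat \<Rightarrow> nat \<Rightarrow> real) \<Rightarrow> nat \<Rightarrow> nat \<Rightarrow> real" where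
  "betaP p c n = (\<Sum>i<c. p i n)"

definition ptilde :: "(nat \<Rightarrow> nat) \<Rightarrow> (nat \<Rightarrow> nat \<Rightarrow> real) \<Rightarrow> nat \<Rightarrow> nat \<Rightarrow> real" where
  "ptilde m p i n = (if odd n then p i n else p (m n - i) n)"

definition betatilde :: "(nat \<Rightarrow> nat) \<Rightarrow> (nat \<Rightarrow> nat \<Rightarrow> real) \<Rightarrow> nat \<Rightarrow> nat \<Rightarrow> real" where
  "betatilde m p i n = (if odd n then betaP p i n else betaP p (m n - i) n)"

text \<open>F evaluated on a digit sequence:
  beta_{i1,1} + sum_{k>=2} betatilde_{ik,k} prod_{j<k} ptilde_{ij,j}
  (the k = 1 term is beta_{i1,1} since betatilde = beta at odd positions).\<close>
definition Fdigits :: "(nat \<Rightarrow> nat) \<Rightarrow> (nat \<Rightarrow> nat \<Rightarrow> real) \<Rightarrow> (nat \<Rightarrow> nat) \<Rightarrow> real" where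
  "Fdigits m p d = (\<Sum>k. betatilde m p (d (Suc k)) (Suc k) * (\<Prod>j\<in>{1..k}. ptilde m p (d j) j))"

definition Ffun :: "(nat \<Rightarrow> nat) \<Rightarrow> (nat \<Rightarrow> nat \<Rightarrow> real) \<Rightarrow> (nat \<Rightarrow> nat \<Rightarrow> real) \<Rightarrow> real \<Rightarrow> real" where
  "Ffun m q p x = Fdigits m p (SOME d. admissible m d \<and> negaQ m q d = x)"

text \<open>Endpoint digit sequences of the cylinder Delta^{-Q}_{c1...cn}:
  A = c1..cn m_{n+1} 0 m_{n+3} 0 ...,   B = c1..cn 0 m_{n+2} 0 m_{n+4} ...\<close>
definition cylA :: "(nat \<Rightarrow> nat) \<Rightarrow> nat \<Rightarrow> (nat \<Rightarrow> nat) \<Rightarrow> nat \<Rightarrow> nat" where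
  "cylA m n c k = (if k \<le> n then c k else if odd (k - n) then m k else 0)"

definition cylB :: "(nat \<Rightarrow> nat) \<Rightarrow> nat \<Rightarrow> (nat \<Rightarrow> nat) \<Rightarrow> nat \<Rightarrow> nat" where
  "cylB m n c k = (if k \<le> n then c k else if odd (k - n) then 0 else m k)"

text \<open>Increment of F on the cylinder: F(right endpoint) - F(left endpoint);
  A is the left endpoint iff n is odd.\<close>
definition muF :: "(nat \<Rightarrow> nat) \<Rightarrow> (nat \<Rightarrow> nat \<Rightarrow> real) \<Rightarrow> (nat \<Rightarrow> nat \<Rightarrow> real) \<Rightarrow> nat \<Rightarrow> (nat \<Rightarrow> nat) \<Rightarrow> real" where
  "muF m q p n c =
     (let A = negaQ m q (cylA m n c); B = negaQ m q (cylB m n c)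
      in if odd n then Ffun m q p B - Ffun m q p A else Ffun m q p A - Ffun m q p B)"

end

theory Submission
  imports Defs
begin

locale negaloc =
  fixes m :: "nat \<Rightarrow> nat" and q p :: "nat \<Rightarrow> nat \<Rightarrow> real"
  assumes q_pos: "\<And>k i. k \<ge> 1 \<Longrightarrow> i \<le> m k \<Longrightarrow> q i k > 0"
    and q_sum: "\<And>k. k \<ge> 1 \<Longrightarrow> (\<Sum>i\<le>m k. q i k) = 1"
    and p_sum: "\<And>k. k \<ge> 1 \<Longrightarrow> (\<Sum>i\<le>m k. p i k) = 1"
    and p_prod: "\<And>d. admissible m d \<Longrightarrow> (\<lambda>N. \<Prod>k\<in>{1..N}. \<bar>p (d k) k\<bar>) \<longlonglongrightarrow> 0"
begin

lemma aQ_Suc: "aQ q (Suc i) k = aQ q i k + q i k"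
  by (simp add: aQ_def)

lemma aQ_0: "aQ q 0 k = 0" by (simp add: aQ_def)

lemma aQ_top: "k \<ge> 1 \<Longrightarrow> aQ q (Suc (m k)) k = 1"
  using q_sum by (simp add: aQ_def lessThan_Suc_atMost)

lemma aQ_le: assumes "k \<ge> 1" "i \<le> j" "j \<le> Suc (m k)" shows "aQ q i k \<le> aQ q j k"
  using assms(2,3)
proof (induction j rule: dec_induct)
  case base then show ?case by simp
next
  case (step n)
  then have "q n k > 0" using q_pos assms(1) by auto
  then show ?case using step by (simp add: aQ_Suc)
qed

lemma aQ_nonneg: "k \<ge> 1 \<Longrightarrow> i \<le> Suc (m k) \<Longrightarrow> aQ q i k \<ge> 0"
  using aQ_le[of k 0 i] by (simp add: aQ_0)

lemma aQ_le1: "k \<ge> 1 \<Longrightarrow> i \<le> Suc (m k) \<Longrightarrow> aQ q i k \<le> 1"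
  using aQ_le[of k i "Suc (m k)"] aQ_top by simp

definition rt :: "(nat \<Rightarrow> nat) \<Rightarrow> nat \<Rightarrow> nat \<Rightarrow> real" where
  "rt e N j = aQ q (e (Suc (N+j))) (Suc (N+j)) * (\<Prod>l\<in>{Suc N..N+j}. q (e l) l)"

definition Rq :: "(nat \<Rightarrow> nat) \<Rightarrow> nat \<Rightarrow> real" where
  "Rq e N = (\<Sum>j. rt e N j)"

lemma prodq_nonneg: "admissible m e \<Longrightarrow> (\<Prod>l\<in>{Suc N..K}. q (e l) l) \<ge> 0"
proof (intro prod_nonneg)
  fix l assume "admissible m e" "l \<in> {Suc N..K}"
  then show "0 \<le> q (e l) l" using q_pos[of l "e l"] by (auto simp: admissible_def)
qed

lemma rt_nonneg: "admissible m e \<Longrightarrow> rt e N j \<ge> 0"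
  unfolding rt_def
  by (intro mult_nonneg_nonneg aQ_nonneg prodq_nonneg) (auto simp: admissible_def le_SucI)

lemma rt_partial: assumes "admissible m e"
  shows "(\<Sum>j<J. rt e N j) + (\<Prod>l\<in>{Suc N..N+J}. q (e l) l) \<le> 1"
proof (induction J)
  case 0 then show ?case by simp
next
  case (Suc J)
  let ?x = "e (Suc (N+J))" and ?k = "Suc (N+J)"
  let ?P = "\<Prod>l\<in>{Suc N..N+J}. q (e l) l"
  have x: "?x \<le> m ?k" using assms by (auto simp: admissible_def)
  have "aQ q ?x ?k + q ?x ?k \<le> 1" using aQ_le1[of ?k "Suc ?x"] x by (simp add: aQ_Suc)
  moreover have "?P \<ge> 0" by (rule prodq_nonneg[OF assms])
  ultimately have "?P * (aQ q ?x ?k + q ?x ?k) \<le> ?P"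
    by (simp add: mult_left_le)
  moreover have "(\<Prod>l\<in>{Suc N..N+Suc J}. q (e l) l) = ?P * q ?x ?k" by simp
  ultimately show ?case using Suc by (simp add: rt_def algebra_simps)
qed

lemma Rq_summable: "admissible m e \<Longrightarrow> summable (rt e N)"
  apply (rule summableI_nonneg_bounded[where x=1])
   apply (simp add: rt_nonneg)
  using rt_partial prodq_nonneg by (smt (verit))

lemma Rq_bounds: assumes "admissible m e" shows "0 \<le> Rq e N" "Rq e N \<le> 1"
  unfolding Rq_def
   apply (rule suminf_nonneg[OF Rq_summable[OF assms]]) apply (simp add: rt_nonneg assms)
  apply (rule suminf_le_const[OF Rq_summable[OF assms]])
  using rt_partial[OF assms] prodq_nonneg[OF assms] by (smt (verit))

lemma Rq_step: assumes "admissible m e"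
  shows "Rq e N = aQ q (e (Suc N)) (Suc N) + q (e (Suc N)) (Suc N) * Rq e (Suc N)"
proof -
  have s: "summable (rt e N)" by (rule Rq_summable[OF assms])
  have "rt e N (Suc j) = q (e (Suc N)) (Suc N) * rt e (Suc N) j" for j
  proof -
    have "(\<Prod>l\<in>{Suc N..N + Suc j}. q (e l) l) = q (e (Suc N)) (Suc N) * (\<Prod>l\<in>{Suc (Suc N)..Suc N + j}. q (e l) l)"
      using prod.atLeast_Suc_atMost[of "Suc N" "N + Suc j" "\<lambda>l. q (e l) l"] by simp
    then show ?thesis unfolding rt_def by (simp add: ac_simps)
  qed
  then have "(\<Sum>j. rt e N (Suc j)) = q (e (Suc N)) (Suc N) * Rq e (Suc N)"
    unfolding Rq_def using suminf_mult[OF Rq_summable[OF assms, of "Suc N"]] by simp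
  moreover have "rt e N 0 = aQ q (e (Suc N)) (Suc N)" by (simp add: rt_def)
  ultimately show ?thesis using suminf_split_head[OF s] unfolding Rq_def by simp
qed

lemma Rq_0: "Rq e 0 = DeltaQ q e"
  unfolding Rq_def DeltaQ_def rt_def by simp

lemma Rq_one_step: assumes a: "admissible m e" and r: "Rq e M = 1"
  shows "e (Suc M) = m (Suc M) \<and> Rq e (Suc M) = 1"
proof -
  let ?x = "e (Suc M)" and ?k = "Suc M"
  have x: "?x \<le> m ?k" using a by (auto simp: admissible_def)
  have qp: "q ?x ?k > 0" using q_pos x by simp
  have R: "0 \<le> Rq e ?k" "Rq e ?k \<le> 1" using Rq_bounds[OF a] by auto
  have eq: "aQ q ?x ?k + q ?x ?k * Rq e ?k = 1" using Rq_step[OF a, of M] r by simp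
  have le1: "aQ q (Suc ?x) ?k \<le> 1" using aQ_le1[of ?k "Suc ?x"] x by simp
  have "q ?x ?k * Rq e ?k \<le> q ?x ?k" using R qp by (simp add: mult_left_le)
  then have "aQ q (Suc ?x) ?k = 1" using eq le1 by (simp add: aQ_Suc)
  moreover have "?x = m ?k"
  proof (rule ccontr)
    assume "?x \<noteq> m ?k"
    then have "Suc (Suc ?x) \<le> Suc (m ?k)" using x by simp
    then have "aQ q (Suc (Suc ?x)) ?k \<le> 1" using aQ_le1[of ?k] by simp
    moreover have "q (Suc ?x) ?k > 0" using q_pos \<open>?x \<noteq> m ?k\<close> x by simp
    ultimately show False using \<open>aQ q (Suc ?x) ?k = 1\<close> by (simp add: aQ_Suc)
  qed
  moreover have "Rq e ?k = 1"
  proof -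
    have "q ?x ?k * Rq e ?k = q ?x ?k * 1" using eq \<open>aQ q (Suc ?x) ?k = 1\<close> aQ_Suc[of ?x ?k] by linarith
    then show ?thesis using qp by (simp only: mult_left_cancel)
  qed
  ultimately show ?thesis by simp
qed

lemma Rq_zero_step: assumes a: "admissible m e" and r: "Rq e M = 0"
  shows "e (Suc M) = 0 \<and> Rq e (Suc M) = 0"
proof -
  let ?x = "e (Suc M)" and ?k = "Suc M"
  have x: "?x \<le> m ?k" using a by (auto simp: admissible_def)
  have qp: "q ?x ?k > 0" using q_pos x by simp
  have R: "0 \<le> Rq e ?k" using Rq_bounds[OF a] by auto
  have eq: "aQ q ?x ?k + q ?x ?k * Rq e ?k = 0" using Rq_step[OF a, of M] r by simp
  have an: "aQ q ?x ?k \<ge> 0" using aQ_nonneg x by simp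
  have "q ?x ?k * Rq e ?k \<ge> 0" using R qp by simp
  then have A: "aQ q ?x ?k = 0" and B: "q ?x ?k * Rq e ?k = 0" using eq an by linarith+
  have "?x = 0"
  proof (rule ccontr)
    assume "?x \<noteq> 0"
    then have "aQ q 1 ?k \<le> aQ q ?x ?k" using aQ_le[of ?k 1 ?x] x by simp
    moreover have "q 0 ?k > 0" using q_pos by simp
    ultimately show False using A by (simp add: aQ_def)
  qed
  then show ?thesis using B qp by simp
qed

lemma Rq_one: assumes a: "admissible m e" and r: "Rq e M = 1" shows "\<forall>k>M. e k = m k"
proof -
  have "Rq e (M+j) = 1 \<and> e (Suc (M+j)) = m (Suc (M+j))" for j
  proof (induction j)
    case 0 then show ?case using Rq_one_step[OF a r] r by simp
  next
    case (Suc j)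
    then have "Rq e (M + Suc j) = 1" using Rq_one_step[OF a, of "M+j"] by simp
    then show ?case using Rq_one_step[OF a, of "M + Suc j"] by simp
  qed
  then show ?thesis by (metis add_Suc_right less_iff_Suc_add)
qed

lemma Rq_zero: assumes a: "admissible m e" and r: "Rq e M = 0" shows "\<forall>k>M. e k = 0"
proof -
  have "Rq e (M+j) = 0 \<and> e (Suc (M+j)) = 0" for j
  proof (induction j)
    case 0 then show ?case using Rq_zero_step[OF a r] r by simp
  next
    case (Suc j)
    then have "Rq e (M + Suc j) = 0" using Rq_zero_step[OF a, of "M+j"] by simp
    then show ?case using Rq_zero_step[OF a, of "M + Suc j"] by simp
  qed
  then show ?thesis by (metis add_Suc_right less_iff_Suc_add)
qed

lemma uniq:
  assumes a: "admissible m e" and a': "admissible m e'" and D: "DeltaQ q e = DeltaQ q e'"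
    and pre: "\<And>k. 1 \<le> k \<Longrightarrow> k \<le> N \<Longrightarrow> e k = e' k" and lt: "e (Suc N) < e' (Suc N)"
  shows "e' (Suc N) = Suc (e (Suc N)) \<and> (\<forall>k>Suc N. e k = m k \<and> e' k = 0)"
proof -
  have RR: "M \<le> N \<Longrightarrow> Rq e M = Rq e' M" for M
  proof (induction M)
    case 0 then show ?case using D by (simp add: Rq_0)
  next
    case (Suc M)
    have "e (Suc M) = e' (Suc M)" using pre Suc.prems by simp
    moreover have "e (Suc M) \<le> m (Suc M)" using a by (auto simp: admissible_def)
    ultimately have "q (e' (Suc M)) (Suc M) > 0" using q_pos by simp
    then show ?case using Suc Rq_step[OF a, of M] Rq_step[OF a', of M] \<open>e (Suc M) = e' (Suc M)\<close> by simp
  qed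
  let ?x = "e (Suc N)" and ?y = "e' (Suc N)" and ?k = "Suc N"
  have y: "?y \<le> m ?k" using a' by (auto simp: admissible_def)
  have qx: "q ?x ?k > 0" "q ?y ?k > 0" using q_pos y lt by auto
  have R: "0 \<le> Rq e ?k" "Rq e ?k \<le> 1" "0 \<le> Rq e' ?k" "Rq e' ?k \<le> 1" using Rq_bounds[OF a] Rq_bounds[OF a'] by auto
  have eq: "aQ q ?x ?k + q ?x ?k * Rq e ?k = aQ q ?y ?k + q ?y ?k * Rq e' ?k"
    using RR[of N] Rq_step[OF a, of N] Rq_step[OF a', of N] by simp
  have l1: "q ?x ?k * Rq e ?k \<le> q ?x ?k" using R qx by (simp add: mult_left_le)
  have l2: "q ?y ?k * Rq e' ?k \<ge> 0" using R qx by simp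
  have l3: "aQ q (Suc ?x) ?k \<le> aQ q ?y ?k" using aQ_le[of ?k "Suc ?x" ?y] lt y by simp
  have e1: "q ?x ?k * Rq e ?k = q ?x ?k" and e2: "q ?y ?k * Rq e' ?k = 0"
    and e3: "aQ q (Suc ?x) ?k = aQ q ?y ?k"
    using eq l1 l2 l3 aQ_Suc[of ?x ?k] by linarith+
  have "?y = Suc ?x"
  proof (rule ccontr)
    assume "?y \<noteq> Suc ?x"
    then have "Suc (Suc ?x) \<le> ?y" using lt by simp
    then have "aQ q (Suc (Suc ?x)) ?k \<le> aQ q ?y ?k" using aQ_le[of ?k] y by simp
    moreover have "q (Suc ?x) ?k > 0" using q_pos \<open>Suc (Suc ?x) \<le> ?y\<close> y by simp
    ultimately show False using e3 by (simp add: aQ_Suc)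
  qed
  moreover have "Rq e ?k = 1" using e1 qx by (metis mult_cancel_left1 less_irrefl)
  moreover have "Rq e' ?k = 0" using e2 qx by simp
  ultimately show ?thesis using Rq_one[OF a] Rq_zero[OF a'] by blast
qed

definition gt :: "(nat \<Rightarrow> nat) \<Rightarrow> nat \<Rightarrow> real" where
  "gt e k = betaP p (e (Suc k)) (Suc k) * (\<Prod>j\<in>{1..k}. p (e j) j)"

definition Sp :: "(nat \<Rightarrow> nat) \<Rightarrow> nat \<Rightarrow> real" where
  "Sp e K = (\<Sum>k<K. gt e k)"

definition Pp :: "(nat \<Rightarrow> nat) \<Rightarrow> nat \<Rightarrow> real" where
  "Pp e K = (\<Prod>j\<in>{1..K}. p (e j) j)"

lemma Sp_Suc: "Sp e (Suc K) = Sp e K + betaP p (e (Suc K)) (Suc K) * Pp e K"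
  by (simp add: Sp_def gt_def Pp_def)

lemma Pp_Suc: "Pp e (Suc K) = Pp e K * p (e (Suc K)) (Suc K)"
  by (simp add: Pp_def)

lemma prefix_cong: assumes "\<And>k. 1 \<le> k \<Longrightarrow> k \<le> N \<Longrightarrow> e k = e' k"
  shows "Sp e N = Sp e' N \<and> Pp e N = Pp e' N"
  using assms
proof (induction N)
  case 0 then show ?case by (simp add: Sp_def Pp_def)
next
  case (Suc N)
  then have "Sp e N = Sp e' N \<and> Pp e N = Pp e' N" by simp
  moreover have "e (Suc N) = e' (Suc N)" using Suc.prems by simp
  ultimately show ?case by (simp add: Sp_Suc Pp_Suc)
qed

lemma betaP_Suc: "betaP p (Suc i) k = betaP p i k + p i k"
  by (simp add: betaP_def)

lemma G_tail0: assumes "\<forall>k>N. e k = 0" shows "gt e sums Sp e N"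
  unfolding Sp_def
  by (rule sums_finite) (use assms in \<open>auto simp: gt_def betaP_def\<close>)

lemma G_tailm: assumes a: "admissible m e" and t: "\<forall>k>N. e k = m k"
  shows "gt e sums (Sp e N + Pp e N)"
proof -
  have inv: "N \<le> K \<Longrightarrow> Sp e K + Pp e K = Sp e N + Pp e N" for K
  proof (induction K rule: dec_induct)
    case base then show ?case by simp
  next
    case (step K)
    have "betaP p (m (Suc K)) (Suc K) + p (m (Suc K)) (Suc K) = 1"
      using p_sum[of "Suc K"] by (simp add: betaP_def lessThan_Suc_atMost[symmetric])
    have eK: "e (Suc K) = m (Suc K)" using t step by simp
    have "Sp e (Suc K) + Pp e (Suc K) = Sp e K + Pp e K * (betaP p (m (Suc K)) (Suc K) + p (m (Suc K)) (Suc K))"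
      by (simp add: Sp_Suc Pp_Suc eK algebra_simps)
    then have "Sp e (Suc K) + Pp e (Suc K) = Sp e K + Pp e K"
      using \<open>betaP p (m (Suc K)) (Suc K) + p (m (Suc K)) (Suc K) = 1\<close> by simp
    then show ?case using step by simp
  qed
  have "(\<lambda>K. \<bar>Pp e K\<bar>) \<longlonglongrightarrow> 0" using p_prod[OF a] by (simp add: Pp_def abs_prod)
  then have "Pp e \<longlonglongrightarrow> 0" by (simp add: tendsto_rabs_zero_iff)
  then have "(\<lambda>K. Sp e N + Pp e N - Pp e K) \<longlonglongrightarrow> Sp e N + Pp e N - 0"
    by (intro tendsto_intros)
  then have L: "(\<lambda>K. Sp e N + Pp e N - Pp e K) \<longlonglongrightarrow> Sp e N + Pp e N" by simp
  have "\<forall>\<^sub>F K in sequentially. Sp e N + Pp e N - Pp e K = Sp e K"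
    using inv by (intro eventually_sequentiallyI[of N]) (metis add_diff_cancel_right')
  then have "(\<lambda>K. Sp e K) \<longlonglongrightarrow> Sp e N + Pp e N" using Lim_transform_eventually[OF L] by blast
  then show ?thesis unfolding sums_def Sp_def by simp
qed

lemma pair_sums:
  assumes a: "admissible m e" and pre: "\<And>k. 1 \<le> k \<Longrightarrow> k \<le> N \<Longrightarrow> e k = e' k"
    and s: "e' (Suc N) = Suc (e (Suc N))" and t: "\<forall>k>Suc N. e k = m k \<and> e' k = 0"
  shows "gt e sums (Sp e' (Suc N))" "gt e' sums (Sp e' (Suc N))"
proof -
  have c: "Sp e N = Sp e' N \<and> Pp e N = Pp e' N" by (rule prefix_cong[OF pre])
  have "Sp e (Suc N) + Pp e (Suc N) = Sp e' (Suc N)"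
    using c s by (simp add: Sp_Suc Pp_Suc betaP_Suc algebra_simps)
  then show "gt e sums (Sp e' (Suc N))" using G_tailm[OF a, of "Suc N"] t by simp
  show "gt e' sums (Sp e' (Suc N))" using G_tail0[of "Suc N" e'] t by simp
qed

lemma G_equal:
  assumes a: "admissible m e" and a': "admissible m e'" and D: "DeltaQ q e = DeltaQ q e'"
    and v: "gt e sums v"
  shows "gt e' sums v"
proof (cases "\<forall>k\<ge>1. e k = e' k")
  case True
  then have "gt e k = gt e' k" for k unfolding gt_def by (intro arg_cong2[where f="(*)"] prod.cong) auto
  then have "gt e = gt e'" by blast
  then show ?thesis using v by simp
next
  case False
  define K where "K = (LEAST k. k \<ge> 1 \<and> e k \<noteq> e' k)"
  obtain k0 where "k0 \<ge> 1 \<and> e k0 \<noteq> e' k0" using False by blast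
  then have K: "K \<ge> 1 \<and> e K \<noteq> e' K" unfolding K_def by (rule LeastI)
  have pre0: "k < K \<Longrightarrow> k \<ge> 1 \<Longrightarrow> e k = e' k" for k using not_less_Least[of k "\<lambda>k. k \<ge> 1 \<and> e k \<noteq> e' k"] unfolding K_def by blast
  obtain N where N: "K = Suc N" using K by (cases K) auto
  have pre: "1 \<le> k \<Longrightarrow> k \<le> N \<Longrightarrow> e k = e' k" for k using pre0[of k] N by linarith
  have pre': "1 \<le> k \<Longrightarrow> k \<le> N \<Longrightarrow> e' k = e k" for k using pre[of k] by (rule sym)
  show ?thesis
  proof (cases "e K < e' K")
    case True
    have u: "e' (Suc N) = Suc (e (Suc N)) \<and> (\<forall>k>Suc N. e k = m k \<and> e' k = 0)"
      using uniq[OF a a' D pre] True N by blast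
    have "v = Sp e' (Suc N)" using sums_unique2[OF v pair_sums(1)[OF a pre]] u by blast
    then show ?thesis using pair_sums(2)[OF a pre] u by blast
  next
    case False
    then have lt: "e' K < e K" using K by simp
    have u: "e (Suc N) = Suc (e' (Suc N)) \<and> (\<forall>k>Suc N. e' k = m k \<and> e k = 0)"
      using uniq[OF a' a D[symmetric] pre'] lt N by blast
    have "v = Sp e (Suc N)" using sums_unique2[OF v pair_sums(2)[OF a' pre']] u by blast
    then show ?thesis using pair_sums(1)[OF a' pre'] u by blast
  qed
qed

lemma nega_adm: "admissible m d \<Longrightarrow> admissible m (negaDigits m d)"
  by (auto simp: admissible_def negaDigits_def)

lemma Fdigits_gt: "Fdigits m p d = suminf (gt (negaDigits m d))"
proof -
  have b: "betatilde m p (d k) k = betaP p (negaDigits m d k) k" for k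
    by (simp add: betatilde_def negaDigits_def)
  have pt: "ptilde m p (d k) k = p (negaDigits m d k) k" for k
    by (simp add: ptilde_def negaDigits_def)
  show ?thesis unfolding Fdigits_def gt_def b pt ..
qed

lemma Ffun_val: assumes X: "admissible m X" and v: "gt (negaDigits m X) sums v"
  shows "Ffun m q p (negaQ m q X) = v"
proof -
  define d where "d = (SOME d. admissible m d \<and> negaQ m q d = negaQ m q X)"
  have "admissible m d \<and> negaQ m q d = negaQ m q X"
    unfolding d_def by (rule someI[of _ X]) (use X in simp)
  then have ad: "admissible m d" and D: "DeltaQ q (negaDigits m X) = DeltaQ q (negaDigits m d)"
    by (auto simp: negaQ_def)
  have "gt (negaDigits m d) sums v" by (rule G_equal[OF nega_adm[OF X] nega_adm[OF ad] D v])
  then show ?thesis unfolding Ffun_def d_def[symmetric] Fdigits_gt by (rule sums_unique[symmetric])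
qed

end

theorem mainTheorem4:
  fixes m :: "nat \<Rightarrow> nat" and q p :: "nat \<Rightarrow> nat \<Rightarrow> real"
    and n :: nat and c :: "nat \<Rightarrow> nat"
  assumes q_pos: "\<And>k i. k \<ge> 1 \<Longrightarrow> i \<le> m k \<Longrightarrow> q i k > 0"
    and q_sum: "\<And>k. k \<ge> 1 \<Longrightarrow> (\<Sum>i\<le>m k. q i k) = 1"
    and q_prod: "\<And>d. admissible m d \<Longrightarrow> (\<lambda>N. \<Prod>k\<in>{1..N}. q (d k) k) \<longlonglongrightarrow> 0"
    and p_bound: "\<And>k i. k \<ge> 1 \<Longrightarrow> i \<le> m k \<Longrightarrow> -1 < p i k \<and> p i k < 1"
    and p_sum: "\<And>k. k \<ge> 1 \<Longrightarrow> (\<Sum>i\<le>m k. p i k) = 1"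
    and p_prod: "\<And>d. admissible m d \<Longrightarrow> (\<lambda>N. \<Prod>k\<in>{1..N}. \<bar>p (d k) k\<bar>) \<longlonglongrightarrow> 0"
    and p_partial: "\<And>k c'. k \<ge> 1 \<Longrightarrow> 1 \<le> c' \<Longrightarrow> c' \<le> m k \<Longrightarrow>
                        0 < (\<Sum>i<c'. p i k) \<and> (\<Sum>i<c'. p i k) < 1"
    and n_pos: "n \<ge> 1"
    and c_digits: "\<And>j. 1 \<le> j \<Longrightarrow> j \<le> n \<Longrightarrow> c j \<le> m j"
  shows "muF m q p n c = (\<Prod>j\<in>{1..n}. ptilde m p (c j) j)"
proof -
  interpret L: negaloc m q p
    by unfold_locales (use q_pos q_sum p_sum p_prod in auto)
  define eA where "eA = negaDigits m (cylA m n c)"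
  define eB where "eB = negaDigits m (cylB m n c)"
  have admA: "admissible m (cylA m n c)" using c_digits by (auto simp: admissible_def cylA_def)
  have admB: "admissible m (cylB m n c)" using c_digits by (auto simp: admissible_def cylB_def)
  have pre: "1 \<le> k \<Longrightarrow> k \<le> n \<Longrightarrow> eA k = eB k" for k
    by (simp add: eA_def eB_def negaDigits_def cylA_def cylB_def)
  have SP: "L.Sp eA n = L.Sp eB n \<and> L.Pp eA n = L.Pp eB n" by (rule L.prefix_cong[OF pre])
  have PA: "L.Pp eA n = (\<Prod>j\<in>{1..n}. ptilde m p (c j) j)"
    unfolding L.Pp_def
    by (rule prod.cong) (auto simp: eA_def negaDigits_def cylA_def ptilde_def)
  show ?thesis
  proof (cases "odd n")
    case True
    have tA: "\<forall>k>n. eA k = 0" using True by (auto simp: eA_def negaDigits_def cylA_def)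
    have tB: "\<forall>k>n. eB k = m k" using True by (auto simp: eB_def negaDigits_def cylB_def)
    have FA: "Ffun m q p (negaQ m q (cylA m n c)) = L.Sp eA n"
      by (rule L.Ffun_val[OF admA]) (use L.G_tail0[OF tA] in \<open>simp add: eA_def\<close>)
    have FB: "Ffun m q p (negaQ m q (cylB m n c)) = L.Sp eB n + L.Pp eB n"
      by (rule L.Ffun_val[OF admB]) (use L.G_tailm[OF L.nega_adm[OF admB] tB[unfolded eB_def]] in \<open>simp add: eB_def\<close>)
    show ?thesis unfolding muF_def Let_def using True FA FB SP PA by simp
  next
    case False
    have tA: "\<forall>k>n. eA k = m k" using False by (auto simp: eA_def negaDigits_def cylA_def)
    have tB: "\<forall>k>n. eB k = 0" using False by (auto simp: eB_def negaDigits_def cylB_def)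
    have FB: "Ffun m q p (negaQ m q (cylB m n c)) = L.Sp eB n"
      by (rule L.Ffun_val[OF admB]) (use L.G_tail0[OF tB] in \<open>simp add: eB_def\<close>)
    have FA: "Ffun m q p (negaQ m q (cylA m n c)) = L.Sp eA n + L.Pp eA n"
      by (rule L.Ffun_val[OF admA]) (use L.G_tailm[OF L.nega_adm[OF admA] tA[unfolded eA_def]] in \<open>simp add: eA_def\<close>)
    show ?thesis unfolding muF_def Let_def using False FA FB SP PA by simp
  qed
qed

end
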